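(* Let $A=\langle a,b\mid\ \rangle$ and $B=\langle c,d\mid\ \rangle$ be free groups of rank two, let $C\le A$ be the subgroup generated by $\{a,\ a^{b^2}(a^b)^{-1}a\}$ and $D\le B$ the subgroup generated by $\{c^{-1},\ c^{d^2}(c^d)^{-1}c\}$. Then $C$ is relatively torsion-free in $A$ and $D$ is relatively torsion-free in $B$.
   Context: Notation $x^y=y^{-1}xy$. A subgroup $H\le K$ is relatively torsion-free if $gh_1gh_2\cdots gh_k\ne1$ for all $g\in K\setminus H$, $k\ge1$, $h_i\in H$. *)

theory Defs
  imports "HOL-Algebra.Algebra"
begin

text \<open>Free group on a set S of generators, realised as reduced words.
A letter is a pair (x, e) with x a generator and e = True meaning x inverse.\<close>

type_synonym 'a letter = "'a \<times> bool"

definition inv_letter :: "'a letter \<Rightarrow> 'a letter" where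
  "inv_letter l = (fst l, \<not> snd l)"

fun cancel_cons :: "'a letter \<Rightarrow> 'a letter list \<Rightarrow> 'a letter list" where
  "cancel_cons x [] = [x]"
| "cancel_cons x (y # ys) = (if y = inv_letter x then ys else x # y # ys)"

definition free_red :: "'a letter list \<Rightarrow> 'a letter list" where
  "free_red xs = foldr cancel_cons xs []"

definition reduced_word :: "'a letter list \<Rightarrow> bool" where
  "reduced_word w \<longleftrightarrow> (\<forall>i. Suc i < length w \<longrightarrow> w ! Suc i \<noteq> inv_letter (w ! i))"

definition free_grp :: "'a set \<Rightarrow> ('a letter list) monoid" where
  "free_grp S = \<lparr>carrier = {w. reduced_word w \<and> fst ` set w \<subseteq> S},
                 monoid.mult = (\<lambda>x y. free_red (x @ y)), one = []\<rparr>"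

definition gen_word :: "'a \<Rightarrow> 'a letter list" where
  "gen_word x = [(x, False)]"

definition conjg :: "('g, 'b) monoid_scheme \<Rightarrow> 'g \<Rightarrow> 'g \<Rightarrow> 'g" where
  "conjg G x y = inv\<^bsub>G\<^esub> y \<otimes>\<^bsub>G\<^esub> x \<otimes>\<^bsub>G\<^esub> y"

definition rel_torsion_free :: "('g, 'b) monoid_scheme \<Rightarrow> 'g set \<Rightarrow> bool" where
  "rel_torsion_free K H \<longleftrightarrow>
     (\<forall>g \<in> carrier K - H. \<forall>hs. hs \<noteq> [] \<and> set hs \<subseteq> H \<longrightarrow>
        foldr (\<lambda>h acc. g \<otimes>\<^bsub>K\<^esub> h \<otimes>\<^bsub>K\<^esub> acc) hs \<one>\<^bsub>K\<^esub> \<noteq> \<one>\<^bsub>K\<^esub>)"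

end

theory Submission
  imports Defs
begin


lemma inv_letter_inv[simp]: "inv_letter (inv_letter l) = l"
  by (simp add: inv_letter_def)

lemma inv_letter_neq[simp]: "inv_letter l \<noteq> l" "l \<noteq> inv_letter l"
  by (auto simp: inv_letter_def prod_eq_iff)

lemma inv_letter_eq_iff[simp]: "inv_letter x = inv_letter y \<longleftrightarrow> x = y"
  by (metis inv_letter_inv)

lemma fst_inv_letter[simp]: "fst (inv_letter l) = fst l"
  by (simp add: inv_letter_def)

lemma reduced_Nil[simp]: "reduced_word []"
  by (simp add: reduced_word_def)

lemma reduced_single[simp]: "reduced_word [x]"
  by (simp add: reduced_word_def)

lemma reduced_Cons2[simp]: "reduced_word (x # y # w) \<longleftrightarrow> y \<noteq> inv_letter x \<and> reduced_word (y # w)"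
proof
  assume r: "reduced_word (x # y # w)"
  then have "y \<noteq> inv_letter x" unfolding reduced_word_def by (metis One_nat_def Suc_less_eq length_Cons nth_Cons_0 nth_Cons_Suc zero_less_Suc)
  moreover have "reduced_word (y # w)" unfolding reduced_word_def
  proof (intro allI impI)
    fix i assume "Suc i < length (y # w)"
    then have "Suc (Suc i) < length (x # y # w)" by simp
    then show "(y # w) ! Suc i \<noteq> inv_letter ((y # w) ! i)" using r unfolding reduced_word_def
      by (metis nth_Cons_Suc)
  qed
  ultimately show "y \<noteq> inv_letter x \<and> reduced_word (y # w)" by blast
next
  assume h: "y \<noteq> inv_letter x \<and> reduced_word (y # w)"
  show "reduced_word (x # y # w)" unfolding reduced_word_def
  proof (intro allI impI)
    fix i assume i: "Suc i < length (x # y # w)"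
    show "(x # y # w) ! Suc i \<noteq> inv_letter ((x # y # w) ! i)"
    proof (cases i)
      case 0 then show ?thesis using h by simp
    next
      case (Suc j) then show ?thesis using h i unfolding reduced_word_def by simp
    qed
  qed
qed

lemma reduced_Cons_tail: "reduced_word (x # w) \<Longrightarrow> reduced_word w"
  by (cases w) auto

lemma reduced_append:
  "reduced_word (xs @ ys) \<longleftrightarrow> reduced_word xs \<and> reduced_word ys \<and>
     (xs \<noteq> [] \<and> ys \<noteq> [] \<longrightarrow> hd ys \<noteq> inv_letter (last xs))"
proof (induction xs)
  case Nil then show ?case by simp
next
  case (Cons x xs)
  show ?case
  proof (cases xs)
    case Nil
    then show ?thesis by (cases ys) auto
  next
    case (Cons x' xs')
    then show ?thesis using Cons.IH by auto
  qed
qed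

lemma cancel_cons_reduced: "reduced_word z \<Longrightarrow> reduced_word (cancel_cons l z)"
  by (cases z) (auto dest: reduced_Cons_tail)

abbreviation cc :: "'a letter list \<Rightarrow> 'a letter list \<Rightarrow> 'a letter list" where
  "cc xs z \<equiv> foldr cancel_cons xs z"

lemma cc_reduced: "reduced_word z \<Longrightarrow> reduced_word (cc xs z)"
  by (induction xs) (auto intro: cancel_cons_reduced)

lemma cancel_cons_bij: "reduced_word z \<Longrightarrow> cancel_cons (inv_letter l) (cancel_cons l z) = z"
proof (cases z)
  case Nil then show ?thesis by simp
next
  case (Cons y ys)
  assume r: "reduced_word z"
  show ?thesis
  proof (cases "y = inv_letter l")
    case True
    then show ?thesis using r Cons by (cases ys) auto
  next
    case False
    then show ?thesis using Cons by simp
  qed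
qed

lemma free_red_reduced[simp]: "reduced_word (free_red w)"
  unfolding free_red_def by (rule cc_reduced) simp

lemma cc_reduced_id: "reduced_word w \<Longrightarrow> cc w [] = w"
proof (induction w)
  case Nil then show ?case by simp
next
  case (Cons x w)
  then have "cc w [] = w" by (auto dest: reduced_Cons_tail)
  then show ?case using Cons.prems by (cases w) auto
qed

lemma free_red_id[simp]: "reduced_word w \<Longrightarrow> free_red w = w"
  unfolding free_red_def by (rule cc_reduced_id)

lemma free_red_append_cc: "free_red (x @ y) = cc x (free_red y)"
  unfolding free_red_def by simp

lemma cc_free_red: "reduced_word z \<Longrightarrow> cc x z = cc (free_red x) z"
proof (induction x)
  case Nil then show ?case by (simp add: free_red_def)
next
  case (Cons l x)
  let ?r = "free_red x"
  have IH: "cc x z = cc ?r z" using Cons by simp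
  have fr: "free_red (l # x) = cancel_cons l ?r" by (simp add: free_red_def)
  have red: "reduced_word ?r" by simp
  show ?case
  proof (cases "?r")
    case Nil then show ?thesis using IH fr by simp
  next
    case (Cons y ys)
    show ?thesis
    proof (cases "y = inv_letter l")
      case True
      have "cc (l # x) z = cancel_cons l (cc ?r z)" using IH by simp
      also have "\<dots> = cancel_cons l (cancel_cons (inv_letter l) (cc ys z))" using Cons True by simp
      also have "\<dots> = cc ys z"
        using cancel_cons_bij[of "cc ys z" "inv_letter l"] cc_reduced[OF Cons.prems] by simp
      finally show ?thesis using fr Cons True by simp
    next
      case False
      then show ?thesis using IH fr Cons by simp
    qed
  qed
qed

lemma free_red_append_left: "free_red (x @ y) = free_red (free_red x @ y)"
  by (simp add: free_red_append_cc cc_free_red[of "free_red y" x])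

lemma free_red_append_right: "free_red (x @ y) = free_red (x @ free_red y)"
  by (simp add: free_red_append_cc)

lemma free_red_append: "free_red (x @ y) = free_red (free_red x @ free_red y)"
  by (metis free_red_append_left free_red_append_right)

lemma free_red_mid: "free_red (x @ m @ y) = free_red (x @ free_red m @ y)"
  by (metis append_assoc free_red_append_left free_red_append_right)

lemma free_red_free_red[simp]: "free_red (free_red x) = free_red x"
  by simp

lemma cancel_cons_set: "set (cancel_cons l z) \<subseteq> insert l (set z)"
  by (cases z) auto

lemma cc_set: "set (cc w z) \<subseteq> set w \<union> set z"
proof (induction w)
  case Nil then show ?case by simp
next
  case (Cons a w) then show ?case using cancel_cons_set[of a "cc w z"] by auto
qed

lemma free_red_set: "set (free_red w) \<subseteq> set w"
  using cc_set[of w "[]"] unfolding free_red_def by simp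

definition winv :: "'a letter list \<Rightarrow> 'a letter list" where
  "winv w = rev (map inv_letter w)"

lemma winv_simps[simp]: "winv [] = []" "winv (l # w) = winv w @ [inv_letter l]"
  "winv (x @ y) = winv y @ winv x" "winv (winv w) = w"
  by (auto simp: winv_def rev_map[symmetric] comp_def)

lemma set_winv: "set (winv w) = inv_letter ` set w"
  by (simp add: winv_def)

lemma reduced_winv: "reduced_word w \<Longrightarrow> reduced_word (winv w)"
proof (induction w rule: induct_list012)
  case (3 x y zs)
  then have "reduced_word (winv (y # zs))" by simp
  then show ?case using 3 by (auto simp: reduced_append)
qed auto

lemma cc_winv: "reduced_word z \<Longrightarrow> cc (x @ winv x) z = z"
proof (induction x arbitrary: z)
  case Nil then show ?case by simp
next
  case (Cons l x)
  have "cc ((l # x) @ winv (l # x)) z = cancel_cons l (cc (x @ winv x) (cancel_cons (inv_letter l) z))"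
    by simp
  also have "\<dots> = cancel_cons l (cancel_cons (inv_letter l) z)"
    using Cons by (simp add: cancel_cons_reduced)
  also have "\<dots> = z" using cancel_cons_bij[OF Cons.prems, of "inv_letter l"] by simp
  finally show ?case .
qed

lemma free_red_winv_right[simp]: "free_red (x @ winv x) = []"
  unfolding free_red_def using cc_winv[of "[]" x] by simp

lemma free_red_winv_left[simp]: "free_red (winv x @ x) = []"
  using free_red_winv_right[of "winv x"] by simp

lemma free_red_cancel_mid: "free_red (x @ m @ winv m @ y) = free_red (x @ y)"
proof -
  have "free_red (x @ m @ winv m @ y) = free_red (x @ free_red (m @ winv m) @ y)"
    using free_red_mid[of x "m @ winv m" y] by simp
  then show ?thesis by simp
qed

lemma free_red_cancel_mid': "free_red (x @ winv m @ m @ y) = free_red (x @ y)"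
  using free_red_cancel_mid[of x "winv m" y] by simp

lemma free_red_winv: "free_red (winv w) = winv (free_red w)"
proof -
  let ?r = "free_red w"
  have "free_red (winv w) = free_red (winv w @ (?r @ winv ?r))"
    using free_red_append_right[of "winv w" "?r @ winv ?r"] by simp
  also have "\<dots> = free_red (free_red (winv w @ ?r) @ winv ?r)"
    by (metis append_assoc free_red_append_left)
  also have "free_red (winv w @ ?r) = []"
    by (metis free_red_append_right free_red_winv_left)
  finally show ?thesis by (simp add: reduced_winv)
qed



lemma free_grp_simps[simp]: "carrier (free_grp S) = {w. reduced_word w \<and> fst ` set w \<subseteq> S}"
  "monoid.mult (free_grp S) x y = free_red (x @ y)" "one (free_grp S) = []"
  by (simp_all add: free_grp_def)

lemma free_red_letters: "fst ` set w \<subseteq> S \<Longrightarrow> fst ` set (free_red w) \<subseteq> S"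
  using free_red_set[of w] by blast

lemma group_free_grp: "group (free_grp S)"
proof (rule groupI)
  fix x y assume "x \<in> carrier (free_grp S)" "y \<in> carrier (free_grp S)"
  then show "x \<otimes>\<^bsub>free_grp S\<^esub> y \<in> carrier (free_grp S)"
  proof -
    have "fst ` set (x @ y) \<subseteq> S" using \<open>x \<in> _\<close> \<open>y \<in> _\<close> by auto
    then show ?thesis by (simp add: free_red_letters)
  qed
next
  show "\<one>\<^bsub>free_grp S\<^esub> \<in> carrier (free_grp S)" by simp
next
  fix x y z
  show "x \<otimes>\<^bsub>free_grp S\<^esub> y \<otimes>\<^bsub>free_grp S\<^esub> z = x \<otimes>\<^bsub>free_grp S\<^esub> (y \<otimes>\<^bsub>free_grp S\<^esub> z)"
  proof -
    have "free_red (free_red (x @ y) @ z) = free_red (x @ y @ z)"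
      by (metis append_assoc free_red_append_left)
    also have "\<dots> = free_red (x @ free_red (y @ z))"
      by (rule free_red_append_right)
    finally show ?thesis by simp
  qed
next
  fix x assume "x \<in> carrier (free_grp S)" then show "\<one>\<^bsub>free_grp S\<^esub> \<otimes>\<^bsub>free_grp S\<^esub> x = x" by simp
next
  fix x assume x: "x \<in> carrier (free_grp S)"
  show "\<exists>y\<in>carrier (free_grp S). y \<otimes>\<^bsub>free_grp S\<^esub> x = \<one>\<^bsub>free_grp S\<^esub>"
    using x by (intro bexI[of _ "winv x"]) (auto simp: reduced_winv set_winv)
qed

lemma inv_free_grp: "x \<in> carrier (free_grp S) \<Longrightarrow> inv\<^bsub>free_grp S\<^esub> x = winv x"
  by (rule group.inv_equality[OF group_free_grp]) (auto simp: reduced_winv set_winv)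

definition wext :: "('a letter \<Rightarrow> 'b letter list) \<Rightarrow> 'a letter list \<Rightarrow> 'b letter list" where
  "wext f w = free_red (concat (map f w))"

definition compat :: "('a letter \<Rightarrow> 'b letter list) \<Rightarrow> bool" where
  "compat f \<longleftrightarrow> (\<forall>l. f (inv_letter l) = winv (f l))"

lemma wext_reduced[simp]: "reduced_word (wext f w)"
  by (simp add: wext_def)

lemma cc_winv': "reduced_word z \<Longrightarrow> cc (winv x @ x) z = z"
  using cc_winv[of z "winv x"] by simp

lemma cc_concat_cancel:
  assumes "compat f" "reduced_word z"
  shows "cc (concat (map f (cancel_cons l r))) z = cc (f l) (cc (concat (map f r)) z)"
proof (cases r)
  case Nil then show ?thesis by simp
next
  case (Cons y ys)
  show ?thesis
  proof (cases "y = inv_letter l")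
    case True
    have "cc (f l) (cc (concat (map f r)) z) = cc (f l @ winv (f l)) (cc (concat (map f ys)) z)"
    proof -
      have "f (inv_letter l) = winv (f l)" using assms(1) unfolding compat_def by blast
      then show ?thesis using Cons True by simp
    qed
    also have "\<dots> = cc (concat (map f ys)) z"
      by (rule cc_winv) (rule cc_reduced[OF assms(2)])
    finally show ?thesis using Cons True by simp
  next
    case False then show ?thesis using Cons by simp
  qed
qed

lemma cc_concat_free_red:
  assumes "compat f" "reduced_word z"
  shows "cc (concat (map f (free_red w))) z = cc (concat (map f w)) z"
proof (induction w)
  case Nil then show ?case by (simp add: free_red_def)
next
  case (Cons l w)
  have "free_red (l # w) = cancel_cons l (free_red w)" by (simp add: free_red_def)
  then show ?case using Cons cc_concat_cancel[OF assms, of l "free_red w"] by simp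
qed

lemma wext_free_red[simp]: "compat f \<Longrightarrow> wext f (free_red w) = wext f w"
  unfolding wext_def free_red_def using cc_concat_free_red[of f "[]" w] by (simp add: free_red_def)

lemma wext_append: "wext f (x @ y) = free_red (wext f x @ wext f y)"
  unfolding wext_def by (simp add: free_red_append[of "concat (map f x)"])

lemma wext_mult: "compat f \<Longrightarrow> wext f (free_red (x @ y)) = free_red (wext f x @ wext f y)"
  by (simp add: wext_append)

lemma concat_map_winv: "compat f \<Longrightarrow> concat (map f (winv x)) = winv (concat (map f x))"
proof (induction x)
  case (Cons l x)
  have "f (inv_letter l) = winv (f l)" using Cons.prems unfolding compat_def by blast
  then show ?case using Cons by simp
qed simp

lemma wext_winv: "compat f \<Longrightarrow> wext f (winv x) = winv (wext f x)"
  unfolding wext_def by (simp add: concat_map_winv free_red_winv)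

lemma free_red_concat: "free_red (concat (map (\<lambda>l. free_red (F l)) w)) = free_red (concat (map F w))"
proof (induction w)
  case Nil then show ?case by simp
next
  case (Cons l w)
  have "free_red (concat (map (\<lambda>l. free_red (F l)) (l # w)))
      = free_red (free_red (F l) @ free_red (concat (map (\<lambda>l. free_red (F l)) w)))"
    using free_red_append_right by simp
  also have "\<dots> = free_red (free_red (F l) @ free_red (concat (map F w)))" using Cons by simp
  also have "\<dots> = free_red (concat (map F (l # w)))" using free_red_append by (metis concat.simps(2) list.simps(9))
  finally show ?case .
qed

lemma wext_comp: "wext g (wext f w) = wext (\<lambda>l. wext g (f l)) w" if "compat g"
proof -
  have "wext g (wext f w) = wext g (concat (map f w))"
    unfolding wext_def[of f] using that by (rule wext_free_red)
  also have "\<dots> = free_red (concat (map g (concat (map f w))))" by (simp add: wext_def)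
  also have "concat (map g (concat (map f w))) = concat (map (\<lambda>l. concat (map g (f l))) w)"
    by (induction w) auto
  also have "free_red \<dots> = wext (\<lambda>l. wext g (f l)) w"
    unfolding wext_def[of "\<lambda>l. wext g (f l)"] unfolding wext_def[of g]
    by (rule free_red_concat[of "\<lambda>l. concat (map g (f l))", symmetric])
  finally show ?thesis .
qed

lemma wext_id: "wext (\<lambda>l. [l]) w = free_red w"
  by (simp add: wext_def)

lemma wext_cong: "(\<And>l. f l = g l) \<Longrightarrow> wext f w = wext g w"
  by presburger

lemma wext_Nil[simp]: "wext f [] = []"
  by (simp add: wext_def free_red_def)



definition Tw :: "('a \<Rightarrow> bool) \<Rightarrow> 'a letter list \<Rightarrow> bool" where
  "Tw T z \<longleftrightarrow> (\<forall>l\<in>set z. T (fst l))"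

lemma Tw_free_red: "Tw T z \<Longrightarrow> Tw T (free_red z)"
  using free_red_set[of z] unfolding Tw_def by blast

lemma Tw_append[simp]: "Tw T (x @ y) \<longleftrightarrow> Tw T x \<and> Tw T y"
  by (auto simp: Tw_def)

lemma cyc_decomp:
  "reduced_word c \<Longrightarrow> c \<noteq> [] \<Longrightarrow> \<exists>u v. c = u @ v @ winv u \<and> v \<noteq> [] \<and> hd v \<noteq> inv_letter (last v)
     \<and> hd (u @ v) = hd c \<and> last (v @ winv u) = last c"
proof (induction "length c" arbitrary: c rule: less_induct)
  case less
  show ?case
  proof (cases "hd c \<noteq> inv_letter (last c)")
    case True
    then show ?thesis using less.prems by (intro exI[of _ "[]"] exI[of _ c]) auto
  next
    case False
    then have hl: "hd c = inv_letter (last c)" by simp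
    obtain x c' where c: "c = x # c'" using less.prems by (cases c) auto
    have "c' \<noteq> []" using hl c by auto
    then obtain m y where c': "c' = m @ [y]" by (metis append_butlast_last_id)
    have y: "y = inv_letter x" using hl c c' by simp
    have "m \<noteq> []" using less.prems(1) c c' y by auto
    have rm: "reduced_word m" using less.prems(1) c c'
      by (metis append_Cons reduced_Cons_tail reduced_append)
    then obtain u' v where d: "m = u' @ v @ winv u'" "v \<noteq> []" "hd v \<noteq> inv_letter (last v)"
      using less.hyps[of m] \<open>m \<noteq> []\<close> c c' by auto
    show ?thesis
      using d c c' y by (intro exI[of _ "x # u'"] exI[of _ v]) auto
  qed
qed

lemma tri_decomp:
  assumes "\<exists>l\<in>set y. \<not> T (fst l)"
  shows "\<exists>zL c zR. y = zL @ c @ zR \<and> Tw T zL \<and> Tw T zR \<and> c \<noteq> [] \<and> \<not> T (fst (hd c)) \<and> \<not> T (fst (last c))"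
proof -
  let ?P = "\<lambda>l. T (fst l)"
  define zL where "zL = takeWhile ?P y"
  define r where "r = dropWhile ?P y"
  have y: "y = zL @ r" by (simp add: zL_def r_def)
  have "r \<noteq> []" using assms by (auto simp: r_def dropWhile_eq_Nil_conv)
  have hr: "\<not> ?P (hd r)" using \<open>r \<noteq> []\<close> unfolding r_def by (metis hd_dropWhile dropWhile_eq_Nil_conv)
  define zR where "zR = rev (takeWhile ?P (rev r))"
  define c where "c = rev (dropWhile ?P (rev r))"
  have r: "r = c @ zR" unfolding c_def zR_def by (metis rev_append takeWhile_dropWhile_id rev_rev_ident)
  have "c \<noteq> []"
  proof
    assume "c = []"
    then have "r = zR" using r by simp
    then have "\<forall>l\<in>set r. ?P l" unfolding zR_def by (metis set_rev set_takeWhileD)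
    then show False using hr \<open>r \<noteq> []\<close> by simp
  qed
  have lc: "\<not> ?P (last c)" using \<open>c \<noteq> []\<close> unfolding c_def
    by (metis hd_dropWhile last_rev rev_is_Nil_conv)
  have hc: "hd c = hd r" using r \<open>c \<noteq> []\<close> by simp
  have "Tw T zL" unfolding zL_def Tw_def by (meson set_takeWhileD)
  moreover have "Tw T zR" unfolding zR_def Tw_def by (metis set_rev set_takeWhileD)
  ultimately show ?thesis using y r \<open>c \<noteq> []\<close> lc hc hr by (intro exI[of _ zL] exI[of _ c] exI[of _ zR]) auto
qed

lemma hd_inv_ne: "T (fst a) \<Longrightarrow> \<not> T (fst b) \<Longrightarrow> a \<noteq> inv_letter b \<and> b \<noteq> inv_letter a"
  by (metis fst_inv_letter)

lemma reduced_appendD1: "reduced_word (xs @ ys) \<Longrightarrow> reduced_word xs"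
  by (simp add: reduced_append)
lemma reduced_appendD2: "reduced_word (xs @ ys) \<Longrightarrow> reduced_word ys"
  by (simp add: reduced_append)
lemma reduced_appendI: "reduced_word xs \<Longrightarrow> reduced_word ys \<Longrightarrow>
   (xs \<noteq> [] \<Longrightarrow> ys \<noteq> [] \<Longrightarrow> hd ys \<noteq> inv_letter (last xs)) \<Longrightarrow> reduced_word (xs @ ys)"
  by (simp add: reduced_append)

lemma ff_step:
  assumes ry: "reduced_word (zL @ (u @ v @ winv u) @ zR)"
    and TL: "Tw T zL" and TR: "Tw T zR" and v: "v \<noteq> []" and cyc: "hd v \<noteq> inv_letter (last v)"
    and hp: "\<not> T (fst (hd (u @ v)))" and he: "\<not> T (fst (last (v @ winv u)))"
    and rz: "reduced_word z" and Tz: "Tw T z"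
    and inv: "R = [] \<or> (\<exists>Q. R = zL @ u @ v @ Q \<and> reduced_word R)"
  shows "\<exists>Q. free_red ((zL @ (u @ v @ winv u) @ zR) @ z @ R) = zL @ u @ v @ Q
           \<and> reduced_word (free_red ((zL @ (u @ v @ winv u) @ zR) @ z @ R))"
proof -
  let ?core = "u @ v @ winv u"
  have r1: "reduced_word (zL @ ?core)" using reduced_appendD1[of "zL @ ?core" zR] ry by simp
  have lc: "last (zL @ ?core) = last (v @ winv u)" using v by simp
  from inv show ?thesis
  proof
    assume R: "R = []"
    define z' where "z' = free_red (zR @ z)"
    have Tz': "Tw T z'" unfolding z'_def using TR Tz by (intro Tw_free_red) simp
    have eq: "free_red ((zL @ ?core @ zR) @ z @ R) = free_red ((zL @ ?core) @ z' @ [])"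
      unfolding z'_def R using free_red_mid[of "zL @ ?core" "zR @ z" "[]"] by simp
    have "reduced_word ((zL @ ?core) @ z')"
    proof (rule reduced_appendI[OF r1])
      show "reduced_word z'" unfolding z'_def by simp
      assume "z' \<noteq> []"
      then show "hd z' \<noteq> inv_letter (last (zL @ ?core))"
        using Tz' he lc hd_inv_ne[of T "hd z'" "last (v @ winv u)"] unfolding Tw_def by auto
    qed
    then have "free_red ((zL @ ?core @ zR) @ z @ R) = zL @ u @ v @ (winv u @ z')"
      using eq by simp
    then show ?thesis by (metis free_red_reduced)
  next
    assume "\<exists>Q. R = zL @ u @ v @ Q \<and> reduced_word R"
    then obtain Q where R: "R = zL @ u @ v @ Q" and rR: "reduced_word R" by blast
    have ruvQ: "reduced_word (u @ v @ Q)" using rR R reduced_appendD2 by blast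
    have rvQ: "reduced_word (v @ Q)" using ruvQ reduced_appendD2 by blast
    define z' where "z' = free_red (zR @ z @ zL)"
    have Tz': "Tw T z'" unfolding z'_def using TR Tz TL by (intro Tw_free_red) simp
    have eq: "free_red ((zL @ ?core @ zR) @ z @ R) = free_red ((zL @ ?core) @ z' @ (u @ v @ Q))"
      unfolding z'_def R using free_red_mid[of "zL @ ?core" "zR @ z @ zL" "u @ v @ Q"] by simp
    show ?thesis
    proof (cases "z' = []")
      case False
      have j1: "hd z' \<noteq> inv_letter (last (zL @ ?core))"
        using Tz' he lc hd_inv_ne[of T "hd z'" "last (v @ winv u)"] False unfolding Tw_def by auto
      have hd2: "hd (u @ v @ Q) = hd (u @ v)" using v by (cases u) auto
      have j2: "hd (u @ v @ Q) \<noteq> inv_letter (last z')"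
        using Tz' hp hd2 hd_inv_ne[of T "last z'" "hd (u @ v)"] False unfolding Tw_def by auto
      have "reduced_word (z' @ (u @ v @ Q))"
        by (rule reduced_appendI) (use j2 ruvQ in \<open>auto simp: z'_def\<close>)
      moreover have "hd (z' @ (u @ v @ Q)) = hd z'" using False by simp
      ultimately have "reduced_word ((zL @ ?core) @ (z' @ (u @ v @ Q)))"
        using reduced_appendI[OF r1, of "z' @ (u @ v @ Q)"] j1 by simp
      then have "free_red ((zL @ ?core @ zR) @ z @ R) = zL @ u @ v @ (winv u @ z' @ u @ v @ Q)"
        using eq by simp
      then show ?thesis by (metis free_red_reduced)
    next
      case True
      have "free_red ((zL @ ?core @ zR) @ z @ R) = free_red ((zL @ u @ v) @ winv u @ u @ (v @ Q))"
        using eq True by simp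
      also have "\<dots> = free_red ((zL @ u @ v) @ (v @ Q))" by (rule free_red_cancel_mid')
      also have "reduced_word ((zL @ u @ v) @ (v @ Q))"
      proof (rule reduced_appendI[OF _ rvQ])
        show "reduced_word (zL @ u @ v)" using r1 reduced_appendD1[of "zL @ u @ v" "winv u"] by simp
        show "hd (v @ Q) \<noteq> inv_letter (last (zL @ u @ v))" using v cyc by simp
      qed
      then have "free_red ((zL @ u @ v) @ (v @ Q)) = zL @ u @ v @ (v @ Q)" by simp
      finally show ?thesis by (metis free_red_reduced)
    qed
  qed
qed

lemma free_factor_lemma:
  assumes ry: "reduced_word y" and ny: "\<exists>l\<in>set y. \<not> T (fst l)"
    and zs: "zs \<noteq> []" "\<forall>z\<in>set zs. reduced_word z \<and> Tw T z"
  shows "foldr (\<lambda>z acc. free_red (y @ z @ acc)) zs [] \<noteq> []"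
proof -
  obtain zL c zR where d: "y = zL @ c @ zR" "Tw T zL" "Tw T zR" "c \<noteq> []" "\<not> T (fst (hd c))" "\<not> T (fst (last c))"
    using tri_decomp[OF ny] by blast
  have "reduced_word c" using ry d(1) reduced_appendD1 reduced_appendD2 by metis
  then obtain u v where cd: "c = u @ v @ winv u" "v \<noteq> []" "hd v \<noteq> inv_letter (last v)"
    "hd (u @ v) = hd c" "last (v @ winv u) = last c"
    using cyc_decomp d(4) by blast
  have y: "y = zL @ (u @ v @ winv u) @ zR" using d(1) cd(1) by simp
  have "\<forall>zs'. set zs' \<subseteq> set zs \<longrightarrow> (let R = foldr (\<lambda>z acc. free_red (y @ z @ acc)) zs' [] in
          (R = [] \<or> (\<exists>Q. R = zL @ u @ v @ Q \<and> reduced_word R)) \<and> (zs' \<noteq> [] \<longrightarrow> R \<noteq> []))"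
  proof
    fix zs' show "set zs' \<subseteq> set zs \<longrightarrow> (let R = foldr (\<lambda>z acc. free_red (y @ z @ acc)) zs' [] in
          (R = [] \<or> (\<exists>Q. R = zL @ u @ v @ Q \<and> reduced_word R)) \<and> (zs' \<noteq> [] \<longrightarrow> R \<noteq> []))"
    proof (induction zs')
      case Nil then show ?case by simp
    next
      case (Cons z zs')
      show ?case
      proof
        assume s: "set (z # zs') \<subseteq> set zs"
        let ?R = "foldr (\<lambda>z acc. free_red (y @ z @ acc)) zs' []"
        have I: "?R = [] \<or> (\<exists>Q. ?R = zL @ u @ v @ Q \<and> reduced_word ?R)" using Cons s by (simp add: Let_def)
        have z: "reduced_word z" "Tw T z" using s zs(2) by auto
        have ry': "reduced_word (zL @ (u @ v @ winv u) @ zR)" using ry y by simp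
        have hp: "\<not> T (fst (hd (u @ v)))" using cd(4) d(5) by simp
        have he: "\<not> T (fst (last (v @ winv u)))" using cd(5) d(6) by simp
        obtain Q where "free_red ((zL @ (u @ v @ winv u) @ zR) @ z @ ?R) = zL @ u @ v @ Q"
           "reduced_word (free_red ((zL @ (u @ v @ winv u) @ zR) @ z @ ?R))"
          using ff_step[OF ry' d(2,3) cd(2,3) hp he z I] by blast
        then have "free_red (y @ z @ ?R) = zL @ u @ v @ Q" "reduced_word (free_red (y @ z @ ?R))"
          unfolding y by simp_all
        then show "let R = foldr (\<lambda>z acc. free_red (y @ z @ acc)) (z # zs') [] in
          (R = [] \<or> (\<exists>Q. R = zL @ u @ v @ Q \<and> reduced_word R)) \<and> (z # zs' \<noteq> [] \<longrightarrow> R \<noteq> [])"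
          using cd(2) by (simp add: Let_def)
      qed
    qed
  qed
  then show ?thesis using zs(1) by (auto simp: Let_def)
qed



definition bpow :: "int \<Rightarrow> nat letter list" where
  "bpow n = (if 0 \<le> n then replicate (nat n) (1, False) else replicate (nat (- n)) (1, True))"

lemma bpow_0[simp]: "bpow 0 = []" by (simp add: bpow_def)

lemma reduced_replicate: "inv_letter x \<noteq> x \<Longrightarrow> reduced_word (replicate k x)"
proof (induction k)
  case (Suc k) then show ?case by (cases k) auto
qed simp

lemma reduced_bpow[simp]: "reduced_word (bpow n)"
  unfolding bpow_def by (auto intro: reduced_replicate)

lemma winv_replicate: "winv (replicate k x) = replicate k (inv_letter x)"
  by (simp add: winv_def)

lemma winv_bpow[simp]: "winv (bpow n) = bpow (- n)"
  by (auto simp: bpow_def winv_replicate inv_letter_def)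

lemma cancel_b_bpow: "cancel_cons (1, False) (bpow n) = bpow (n + 1)"
proof (cases "0 \<le> n")
  case True
  then show ?thesis by (cases "nat n") (auto simp: bpow_def inv_letter_def nat_add_distrib)
next
  case False
  then obtain k where k: "nat (- n) = Suc k" by (metis gr0_implies_Suc zero_less_nat_eq neg_0_less_iff_less not_le)
  then have "nat (- (n + 1)) = k" by linarith
  then show ?thesis using False k by (auto simp: bpow_def inv_letter_def)
qed

lemma cancel_B_bpow: "cancel_cons (1, True) (bpow n) = bpow (n - 1)"
proof -
  have "cancel_cons (1, True) (bpow n) = winv (winv (cancel_cons (1, True) (bpow n)))" by simp
  show ?thesis
  proof (cases "n \<le> 0")
    case True
    then show ?thesis
    proof (cases "nat (- n)")
      case (Suc k)
      then have "nat (- (n - 1)) = Suc (Suc k)" by linarith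
      then show ?thesis using True Suc by (auto simp: bpow_def inv_letter_def)
    qed (auto simp: bpow_def inv_letter_def)
  next
    case False
    then obtain k where k: "nat n = Suc k" by (metis gr0_implies_Suc zero_less_nat_eq not_le)
    then have "nat (n - 1) = k" by linarith
    then show ?thesis using False k by (auto simp: bpow_def inv_letter_def)
  qed
qed

lemma cc_bpow: "cc (bpow m) (bpow n) = bpow (m + n)"
proof (cases "0 \<le> m")
  case True
  have "cc (replicate k (1, False)) (bpow n) = bpow (int k + n)" for k
  proof (induction k)
    case (Suc k) then show ?case using cancel_b_bpow[of "n + int k"] by (simp del: foldr_replicate add: algebra_simps)
  qed simp
  moreover have "bpow m = replicate (nat m) (1, False)" using True by (simp add: bpow_def)
  ultimately show ?thesis using True by (metis add.commute int_nat_eq)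
next
  case False
  have "cc (replicate k (1, True)) (bpow n) = bpow (n - int k)" for k
  proof (induction k)
    case (Suc k) then show ?case using cancel_B_bpow[of "n - int k"] by (simp del: foldr_replicate add: algebra_simps)
  qed simp
  moreover have "bpow m = replicate (nat (- m)) (1, True)" using False by (simp add: bpow_def)
  moreover have "n - int (nat (- m)) = m + n" using False by simp
  ultimately show ?thesis by metis
qed

lemma free_red_bpow: "free_red (bpow m @ bpow n) = bpow (m + n)"
  by (simp add: free_red_append_cc cc_bpow)

lemma free_red_bpow_mid: "free_red (bpow m @ bpow n @ x) = free_red (bpow (m + n) @ x)"
  by (metis append_assoc free_red_append_left free_red_bpow)

definition psi_l :: "nat letter \<Rightarrow> int" where
  "psi_l l = (if fst l = 0 then 0 else if snd l then -1 else 1)"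

definition psi :: "nat letter list \<Rightarrow> int" where
  "psi w = sum_list (map psi_l w)"

lemma psi_simps[simp]: "psi [] = 0" "psi (l # w) = psi_l l + psi w" "psi (x @ y) = psi x + psi y"
  by (simp_all add: psi_def)

lemma psi_l_inv[simp]: "psi_l (inv_letter l) = - psi_l l"
  by (simp add: psi_l_def inv_letter_def)

lemma psi_cancel_cons: "psi (cancel_cons l z) = psi_l l + psi z"
  by (cases z) auto

lemma psi_free_red[simp]: "psi (free_red w) = psi w"
proof -
  have "psi (cc w z) = psi w + psi z" for z by (induction w) (auto simp: psi_cancel_cons)
  then show ?thesis unfolding free_red_def by simp
qed

lemma psi_bpow[simp]: "psi (bpow n) = n"
  by (auto simp: bpow_def psi_def psi_l_def sum_list_replicate)

fun Om :: "int \<Rightarrow> nat letter list \<Rightarrow> int letter list" where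
  "Om h [] = []"
| "Om h (l # w) = (if fst l = 0 then (h, snd l) # Om h w else Om (h - psi_l l) w)"

lemma Om_append: "Om h (x @ y) = Om h x @ Om (h - psi x) y"
  by (induction h x rule: Om.induct) (auto simp: psi_l_def algebra_simps)

lemma Om_bpow[simp]: "Om h (bpow n) = []"
proof -
  have "Om h (replicate k (1, e)) = []" for k e by (induction k arbitrary: h) auto
  then show ?thesis by (simp add: bpow_def)
qed

definition phi :: "int letter \<Rightarrow> nat letter list" where
  "phi l = bpow (- fst l) @ [(0, snd l)] @ bpow (fst l)"

lemma compat_phi: "compat phi"
  by (auto simp: compat_def phi_def inv_letter_def)

lemma psi_phi[simp]: "psi (phi l) = 0"
  by (simp add: phi_def psi_l_def)

lemma Om_phi: "Om h (concat (map phi y)) = map (\<lambda>l. (h + fst l, snd l)) y"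
proof (induction y)
  case Nil then show ?case by simp
next
  case (Cons l y)
  have "Om h (phi l) = [(h + fst l, snd l)]"
    by (simp add: phi_def Om_append)
  then show ?case using Cons by (simp add: Om_append)
qed

lemma Om_phi0: "Om 0 (concat (map phi y)) = y"
  using Om_phi[of 0 y] by simp

lemma free_red_single_cancel: "free_red (x # inv_letter x # w) = free_red w"
  using free_red_cancel_mid[of "[]" "[x]" w] by simp

lemma Om_cancel: "free_red (Om h (l # r)) = free_red (Om h (cancel_cons l r))"
proof (cases r)
  case Nil then show ?thesis by simp
next
  case (Cons y ys)
  show ?thesis
  proof (cases "y = inv_letter l")
    case True
    show ?thesis
    proof (cases "fst l = 0")
      case True
      then have "Om h (l # y # ys) = (h, snd l) # inv_letter (h, snd l) # Om h ys"
        using \<open>y = inv_letter l\<close> by (simp add: inv_letter_def)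
      then show ?thesis using Cons \<open>y = inv_letter l\<close> free_red_single_cancel by simp
    next
      case False
      then show ?thesis using Cons True by (simp add: inv_letter_def psi_l_def)
    qed
  next
    case False then show ?thesis using Cons by simp
  qed
qed

lemma Om_free_red: "free_red (Om h (free_red w)) = free_red (Om h w)"
proof (induction w arbitrary: h)
  case Nil then show ?case by (simp add: free_red_def)
next
  case (Cons l w)
  have split: "Om h (l # x) = Om h [l] @ Om (h - psi_l l) x" for x
    using Om_append[of h "[l]" x] by simp
  have "free_red (Om h (l # w)) = free_red (Om h [l] @ free_red (Om (h - psi_l l) w))"
    using split free_red_append_right by metis
  also have "\<dots> = free_red (Om h [l] @ free_red (Om (h - psi_l l) (free_red w)))"
    using Cons by simp
  also have "\<dots> = free_red (Om h (l # free_red w))"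
    using split free_red_append_right by metis
  also have "\<dots> = free_red (Om h (cancel_cons l (free_red w)))" by (rule Om_cancel)
  also have "cancel_cons l (free_red w) = free_red (l # w)" by (simp add: free_red_def)
  finally show ?case by simp
qed

definition Tl :: "nat set \<Rightarrow> nat letter list \<Rightarrow> bool" where
  "Tl S w \<longleftrightarrow> fst ` set w \<subseteq> S"

lemma Om_phi_inv:
  assumes "fst ` set g \<subseteq> {0, 1}"
  shows "free_red (concat (map phi (Om h g))) = free_red (bpow (- h) @ g @ bpow (h - psi g))"
  using assms
proof (induction g arbitrary: h)
  case Nil
  then show ?case using free_red_bpow[of "- h" h] by simp
next
  case (Cons l g)
  then have IH: "free_red (concat (map phi (Om h' g))) = free_red (bpow (- h') @ g @ bpow (h' - psi g))" for h'
    by simp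
  have l: "fst l = 0 \<or> fst l = 1" using Cons.prems by auto
  show ?case
  proof (cases "fst l = 0")
    case True
    have "free_red (concat (map phi (Om h (l # g)))) = free_red (phi (h, snd l) @ concat (map phi (Om h g)))"
      using True by simp
    also have "\<dots> = free_red (phi (h, snd l) @ free_red (bpow (- h) @ g @ bpow (h - psi g)))"
      using IH free_red_append_right by metis
    also have "\<dots> = free_red (phi (h, snd l) @ (bpow (- h) @ g @ bpow (h - psi g)))"
      by (rule free_red_append_right[symmetric])
    also have "\<dots> = free_red ((bpow (- h) @ [(0, snd l)]) @ bpow h @ winv (bpow h) @ (g @ bpow (h - psi g)))"
      by (simp add: phi_def)
    also have "\<dots> = free_red ((bpow (- h) @ [(0, snd l)]) @ (g @ bpow (h - psi g)))"
      by (rule free_red_cancel_mid)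
    finally show ?thesis using True by (cases l) (simp add: psi_l_def)
  next
    case False
    then have l1: "fst l = 1" using l by simp
    have lb: "[l] = bpow (psi_l l)" using l1 by (cases l) (auto simp: psi_l_def bpow_def)
    have "free_red (concat (map phi (Om h (l # g)))) = free_red (bpow (- (h - psi_l l)) @ g @ bpow (h - psi_l l - psi g))"
      using False IH by simp
    also have "\<dots> = free_red (bpow (- h) @ bpow (psi_l l) @ g @ bpow (h - psi (l # g)))"
      by (simp add: free_red_bpow_mid algebra_simps)
    finally show ?thesis using lb by (metis append_Cons append_Nil)
  qed
qed



definition nu :: "int letter \<Rightarrow> int letter list" where
  "nu l = (if fst l = 2 then (if snd l then [(1, True), (2, True)] else [(2, False), (1, False)]) else [l])"

definition nuinv :: "int letter \<Rightarrow> int letter list" where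
  "nuinv l = (if fst l = 2 then (if snd l then [(1, False), (2, True)] else [(2, False), (1, True)]) else [l])"

lemma compat_nu: "compat nu"
  by (auto simp: compat_def nu_def inv_letter_def)

lemma compat_nuinv: "compat nuinv"
  by (auto simp: compat_def nuinv_def inv_letter_def)

lemma nu_nuinv: "wext nu (nuinv l) = [l]"
  by (cases l) (auto simp: nu_def nuinv_def wext_def free_red_def inv_letter_def)

lemma nuinv_nu: "wext nuinv (nu l) = [l]"
  by (cases l) (auto simp: nu_def nuinv_def wext_def free_red_def inv_letter_def)

lemma wext_nu_nuinv: "wext nu (wext nuinv q) = free_red q"
  using wext_comp[OF compat_nu, of nuinv q] nu_nuinv wext_id by simp

lemma wext_nuinv_nu: "wext nuinv (wext nu q) = free_red q"
  using wext_comp[OF compat_nuinv, of nu q] nuinv_nu wext_id by simp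

definition Lam :: "int letter list \<Rightarrow> nat letter list" where
  "Lam y = wext phi (wext nuinv y)"

definition Theta :: "nat letter list \<Rightarrow> int letter list" where
  "Theta g = wext nu (Om 0 g)"

lemma Lam_Theta:
  assumes "reduced_word g" "fst ` set g \<subseteq> {0, 1}" "psi g = 0"
  shows "Lam (Theta g) = g"
proof -
  have "Lam (Theta g) = wext phi (free_red (Om 0 g))"
    unfolding Lam_def Theta_def by (simp add: wext_nuinv_nu)
  also have "\<dots> = wext phi (Om 0 g)" using compat_phi by simp
  also have "\<dots> = free_red (bpow 0 @ g @ bpow 0)"
    unfolding wext_def using Om_phi_inv[OF assms(2), of 0] assms(3) by simp
  finally show ?thesis using assms(1) by simp
qed

lemma wext_phi_inj: assumes "reduced_word r" "wext phi r = []" shows "r = []"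
proof -
  have "free_red (Om 0 (free_red (concat (map phi r)))) = free_red (Om 0 [])"
    using assms(2) unfolding wext_def by simp
  then have "free_red (Om 0 (concat (map phi r))) = []"
    using Om_free_red[of 0 "concat (map phi r)"] by (simp add: free_red_def[of "[]"])
  then show ?thesis using Om_phi0[of r] assms(1) by simp
qed

lemma Lam_inj: "Lam q = [] \<Longrightarrow> free_red q = []"
  unfolding Lam_def using wext_phi_inj[of "wext nuinv q"] wext_nu_nuinv[of q] by simp

lemma Lam_mult: "Lam (free_red (x @ y)) = free_red (Lam x @ Lam y)"
proof -
  have "wext nuinv (free_red (x @ y)) = free_red (wext nuinv x @ wext nuinv y)"
    using compat_nuinv by (simp add: wext_append)
  then show ?thesis unfolding Lam_def using wext_mult[OF compat_phi] by simp
qed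

lemma Lam_winv: "Lam (winv x) = winv (Lam x)"
  unfolding Lam_def using compat_phi compat_nuinv by (simp add: wext_winv)

lemma Lam_reduced[simp]: "reduced_word (Lam x)"
  by (simp add: Lam_def)

lemma psi_Lam[simp]: "psi (Lam x) = 0"
proof -
  have "psi (concat (map phi y)) = 0" for y by (induction y) auto
  then show ?thesis by (simp add: Lam_def wext_def)
qed

lemma letters_bpow: "fst ` set (bpow n) \<subseteq> {0, 1}"
  by (auto simp: bpow_def)

lemma letters_phi: "fst ` set (phi m) \<subseteq> {0, 1}"
  using letters_bpow[of "fst m"] letters_bpow[of "- fst m"] unfolding phi_def
  by (simp only: set_append image_Un) auto

lemma letters_Lam: "fst ` set (Lam x) \<subseteq> {0, 1}"
proof -
  have "fst ` set (concat (map phi y)) \<subseteq> {0, 1}" for y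
  proof (induction y)
    case (Cons m y)
    have "fst ` set (concat (map phi (m # y))) = fst ` set (phi m) \<union> fst ` set (concat (map phi y))"
      by (simp add: image_Un)
    then show ?case using Cons letters_phi[of m] by (simp only:) (rule Un_least)
  qed simp
  moreover have "fst ` set (free_red W) \<subseteq> fst ` set W" for W :: "nat letter list"
    by (rule image_mono) (rule free_red_set)
  ultimately show ?thesis unfolding Lam_def wext_def by (meson order_trans)
qed

definition T0 :: "int \<Rightarrow> bool" where "T0 i \<longleftrightarrow> i = 0 \<or> i = 2"

definition Cset :: "nat letter list set" where
  "Cset = Lam ` {z. reduced_word z \<and> Tw T0 z}"

lemma Lam_free_red[simp]: "Lam (free_red x) = Lam x"
  unfolding Lam_def using compat_nuinv by simp

lemma Lam_append: "Lam (x @ y) = free_red (Lam x @ Lam y)"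
  using Lam_mult[of x y] by simp

lemma Lam_Nil[simp]: "Lam [] = []"
  by (simp add: Lam_def)

abbreviation FA :: "nat letter list monoid" where "FA \<equiv> free_grp {0, 1}"

lemma Lam_carrier: "Lam z \<in> carrier FA"
  unfolding free_grp_simps mem_Collect_eq using Lam_reduced[of z] letters_Lam[of z] by (rule conjI)

lemma Cset_carrier: "Cset \<subseteq> carrier FA"
  unfolding Cset_def using Lam_carrier by blast

lemma Tw_winv: "Tw T (winv z) = Tw T z"
  by (auto simp: Tw_def set_winv)

lemma Cset_I: "reduced_word z \<Longrightarrow> Tw T0 z \<Longrightarrow> Lam z \<in> Cset"
  unfolding Cset_def by blast

lemma Cset_E: "h \<in> Cset \<Longrightarrow> (\<And>z. h = Lam z \<Longrightarrow> reduced_word z \<Longrightarrow> Tw T0 z \<Longrightarrow> P) \<Longrightarrow> P"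
  unfolding Cset_def by blast

lemma Cset_inv: "h \<in> Cset \<Longrightarrow> inv\<^bsub>FA\<^esub> h \<in> Cset"
proof -
  assume h: "h \<in> Cset"
  then have "inv\<^bsub>FA\<^esub> h = winv h" using Cset_carrier inv_free_grp by blast
  moreover obtain z where "h = Lam z" "reduced_word z" "Tw T0 z" using h by (rule Cset_E)
  ultimately show ?thesis using Lam_winv[of z] Cset_I[of "winv z"] by (simp add: reduced_winv Tw_winv)
qed

lemma Cset_mult: "h1 \<in> Cset \<Longrightarrow> h2 \<in> Cset \<Longrightarrow> h1 \<otimes>\<^bsub>FA\<^esub> h2 \<in> Cset"
proof -
  assume "h1 \<in> Cset" "h2 \<in> Cset"
  then obtain z1 z2 where "h1 = Lam z1" "Tw T0 z1" "h2 = Lam z2" "Tw T0 z2"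
    by (metis Cset_E)
  then show ?thesis using Lam_mult[of z1 z2] Cset_I[of "free_red (z1 @ z2)"]
    by (simp add: Tw_free_red)
qed

lemma generate_sub_Cset: "H \<subseteq> Cset \<Longrightarrow> generate FA H \<subseteq> Cset"
proof
  fix x assume H: "H \<subseteq> Cset" and x: "x \<in> generate FA H"
  from x show "x \<in> Cset"
  proof (induction rule: generate.induct)
    case one then show ?case using Cset_I[of "[]"] by (simp add: Tw_def)
  next
    case (incl h) then show ?case using H by blast
  next
    case (inv h) then show ?case using H Cset_inv by blast
  next
    case (eng h1 h2) then show ?case using Cset_mult by blast
  qed
qed

lemma Cset_sub_generate:
  assumes "Lam [(0, False)] \<in> generate FA H" "Lam [(0, True)] \<in> generate FA H"
    "Lam [(2, False)] \<in> generate FA H" "Lam [(2, True)] \<in> generate FA H"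
  shows "Cset \<subseteq> generate FA H"
proof
  fix h assume "h \<in> Cset"
  then obtain z where hz: "h = Lam z" "reduced_word z" "Tw T0 z" by (rule Cset_E)
  have "reduced_word z \<Longrightarrow> Tw T0 z \<Longrightarrow> Lam z \<in> generate FA H"
  proof (induction z)
    case Nil then show ?case using generate.one[of FA H] by simp
  next
    case (Cons l z)
    have "Lam z \<in> generate FA H" using Cons by (simp add: Tw_def reduced_Cons_tail)
    moreover have "Lam [l] \<in> generate FA H"
    proof -
      have "fst l = 0 \<or> fst l = 2" using Cons.prems(2) by (simp add: Tw_def T0_def)
      moreover obtain i e where l: "l = (i, e)" by (cases l)
      ultimately have "l = (0, False) \<or> l = (0, True) \<or> l = (2, False) \<or> l = (2, True)"
        by (cases e) auto
      then show ?thesis using assms by blast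
    qed
    moreover have "Lam (l # z) = Lam [l] \<otimes>\<^bsub>FA\<^esub> Lam z"
      using Lam_append[of "[l]" z] by simp
    ultimately show ?case by (simp only:) (rule generate.eng)
  qed
  then show "h \<in> generate FA H" using hz by simp
qed



definition wA :: "nat letter list" where
  "wA = [(1, True), (1, True), (0, False), (1, False), (0, True), (1, False), (0, False)]"

lemma Lam_0F: "Lam [(0, False)] = [(0, False)]"
  by (simp add: Lam_def wext_def nuinv_def phi_def free_red_def)

lemma Lam_0T: "Lam [(0, True)] = [(0, True)]"
  by (simp add: Lam_def wext_def nuinv_def phi_def free_red_def)

lemma Lam_2F: "Lam [(2, False)] = [(1, True), (1, True), (0, False), (1, False), (0, True), (1, False)]"
  by (simp add: Lam_def wext_def nuinv_def phi_def free_red_def bpow_def inv_letter_def numeral_2_eq_2 del: foldr_replicate)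

lemma Lam_2T: "Lam [(2, True)] = [(1, True), (0, False), (1, True), (0, True), (1, False), (1, False)]"
  by (simp add: Lam_def wext_def nuinv_def phi_def free_red_def bpow_def inv_letter_def numeral_2_eq_2 del: foldr_replicate)

lemma Lam_wA: "Lam [(2, False), (0, False)] = wA"
  by (simp add: wA_def Lam_def wext_def nuinv_def phi_def free_red_def bpow_def inv_letter_def numeral_2_eq_2 del: foldr_replicate)

lemma wA_eq: "conjg FA [(0, False)] ([(1, False)] \<otimes>\<^bsub>FA\<^esub> [(1, False)]) \<otimes>\<^bsub>FA\<^esub>
     inv\<^bsub>FA\<^esub> (conjg FA [(0, False)] [(1, False)]) \<otimes>\<^bsub>FA\<^esub> [(0, False)] = wA"
  by (simp add: conjg_def inv_free_grp free_red_def inv_letter_def wA_def)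

lemma inv_a: "inv\<^bsub>FA\<^esub> [(0, False)] = [(0, True)]"
  by (simp add: inv_free_grp inv_letter_def)

lemma inv_A: "inv\<^bsub>FA\<^esub> [(0, True)] = [(0, False)]"
  by (simp add: inv_free_grp inv_letter_def)

lemma wA_carrier: "wA \<in> carrier FA"
  by (simp add: wA_def inv_letter_def)

lemma inv_wA: "inv\<^bsub>FA\<^esub> wA = [(0, True), (1, True), (0, False), (1, True), (0, True), (1, False), (1, False)]"
  unfolding inv_free_grp[OF wA_carrier] by (simp add: wA_def inv_letter_def)

lemma Lam_2F': "Lam [(2, False)] = wA \<otimes>\<^bsub>FA\<^esub> [(0, True)]"
  by (simp add: Lam_2F wA_def free_red_def inv_letter_def)

lemma Lam_2T': "Lam [(2, True)] = [(0, False)] \<otimes>\<^bsub>FA\<^esub> inv\<^bsub>FA\<^esub> wA"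
  by (simp only: inv_wA Lam_2T) (simp add: free_red_def inv_letter_def)

lemma a_Cset: "[(0, False)] \<in> Cset"
  using Cset_I[of "[(0, False)]"] Lam_0F by (simp add: Tw_def T0_def)

lemma A_Cset: "[(0, True)] \<in> Cset"
  using Cset_I[of "[(0, True)]"] Lam_0T by (simp add: Tw_def T0_def)

lemma wA_Cset: "wA \<in> Cset"
  using Cset_I[of "[(2, False), (0, False)]"] Lam_wA by (simp add: Tw_def T0_def inv_letter_def)

lemma gen1: "generate FA {[(0, False)], wA} = Cset"
proof
  let ?H = "{[(0, False)], wA}"
  show "generate FA ?H \<subseteq> Cset" using a_Cset wA_Cset by (intro generate_sub_Cset) auto
  have ia: "[(0, False)] \<in> generate FA ?H" by (rule generate.incl) simp
  have iw: "wA \<in> generate FA ?H" by (rule generate.incl) simp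
  have iA: "[(0, True)] \<in> generate FA ?H"
    using generate.inv[of "[(0, False)]" ?H FA] inv_a by simp
  have iW: "inv\<^bsub>FA\<^esub> wA \<in> generate FA ?H"
    by (rule generate.inv) simp
  show "Cset \<subseteq> generate FA ?H"
  proof (rule Cset_sub_generate)
    show "Lam [(0, False)] \<in> generate FA ?H" using Lam_0F ia by simp
    show "Lam [(0, True)] \<in> generate FA ?H" using Lam_0T iA by simp
    show "Lam [(2, False)] \<in> generate FA ?H" unfolding Lam_2F' using iw iA by (rule generate.eng)
    show "Lam [(2, True)] \<in> generate FA ?H" unfolding Lam_2T' using ia iW by (rule generate.eng)
  qed
qed

lemma gen2: "generate FA {[(0, True)], wA} = Cset"
proof
  let ?H = "{[(0, True)], wA}"
  show "generate FA ?H \<subseteq> Cset" using A_Cset wA_Cset by (intro generate_sub_Cset) auto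
  have iA: "[(0, True)] \<in> generate FA ?H" by (rule generate.incl) simp
  have iw: "wA \<in> generate FA ?H" by (rule generate.incl) simp
  have ia: "[(0, False)] \<in> generate FA ?H"
    using generate.inv[of "[(0, True)]" ?H FA] inv_A by simp
  have iW: "inv\<^bsub>FA\<^esub> wA \<in> generate FA ?H"
    by (rule generate.inv) simp
  show "Cset \<subseteq> generate FA ?H"
  proof (rule Cset_sub_generate)
    show "Lam [(0, False)] \<in> generate FA ?H" using Lam_0F ia by simp
    show "Lam [(0, True)] \<in> generate FA ?H" using Lam_0T iA by simp
    show "Lam [(2, False)] \<in> generate FA ?H" unfolding Lam_2F' using iw iA by (rule generate.eng)
    show "Lam [(2, True)] \<in> generate FA ?H" unfolding Lam_2T' using ia iW by (rule generate.eng)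
  qed
qed

lemma obtain_zs: "set hs \<subseteq> Cset \<Longrightarrow> \<exists>zs. hs = map Lam zs \<and> (\<forall>z\<in>set zs. reduced_word z \<and> Tw T0 z)"
proof (induction hs)
  case Nil then show ?case by simp
next
  case (Cons h hs)
  then obtain zs where "hs = map Lam zs" "\<forall>z\<in>set zs. reduced_word z \<and> Tw T0 z" by auto
  moreover obtain z where "h = Lam z" "reduced_word z" "Tw T0 z" using Cons.prems by (auto elim: Cset_E)
  ultimately show ?case by (intro exI[of _ "z # zs"]) auto
qed

lemma rtf_Cset: "rel_torsion_free FA Cset"
  unfolding rel_torsion_free_def
proof (intro ballI allI impI)
  fix g hs assume g: "g \<in> carrier FA - Cset" and hs: "hs \<noteq> [] \<and> set hs \<subseteq> Cset"
  let ?F = "foldr (\<lambda>h acc. free_red (free_red (g @ h) @ acc)) hs []"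
  have F: "foldr (\<lambda>h acc. g \<otimes>\<^bsub>FA\<^esub> h \<otimes>\<^bsub>FA\<^esub> acc) hs \<one>\<^bsub>FA\<^esub> = ?F" by simp
  have gc: "reduced_word g" "fst ` set g \<subseteq> {0, 1}" using g by auto
  show "foldr (\<lambda>h acc. g \<otimes>\<^bsub>FA\<^esub> h \<otimes>\<^bsub>FA\<^esub> acc) hs \<one>\<^bsub>FA\<^esub> \<noteq> \<one>\<^bsub>FA\<^esub>"
  proof (cases "psi g = 0")
    case False
    have "set hs' \<subseteq> Cset \<Longrightarrow> psi (foldr (\<lambda>h acc. free_red (free_red (g @ h) @ acc)) hs' []) = int (length hs') * psi g" for hs'
    proof (induction hs')
      case (Cons h hs')
      then have "psi h = 0" by (auto elim: Cset_E)
      then show ?case using Cons by (simp add: algebra_simps)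
    qed simp
    then have "psi ?F = int (length hs) * psi g" using hs by blast
    then have "psi ?F \<noteq> 0" using False hs by simp
    then show ?thesis using F by auto
  next
    case True
    define y where "y = Theta g"
    have ly: "Lam y = g" unfolding y_def using Lam_Theta gc True by blast
    have ry: "reduced_word y" unfolding y_def Theta_def by simp
    have ny: "\<exists>l\<in>set y. \<not> T0 (fst l)"
    proof (rule ccontr)
      assume "\<not> ?thesis"
      then have "Tw T0 y" by (auto simp: Tw_def)
      then have "g \<in> Cset" using Cset_I[OF ry] ly by simp
      then show False using g by simp
    qed
    obtain zs where zs: "hs = map Lam zs" "\<forall>z\<in>set zs. reduced_word z \<and> Tw T0 z"
      using obtain_zs hs by blast
    let ?G = "foldr (\<lambda>z acc. free_red (y @ z @ acc)) zs []"
    have eq: "foldr (\<lambda>h acc. free_red (free_red (g @ h) @ acc)) (map Lam zs') [] =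
              Lam (foldr (\<lambda>z acc. free_red (y @ z @ acc)) zs' [])" for zs'
    proof (induction zs')
      case Nil then show ?case by simp
    next
      case (Cons z zs')
      let ?R = "foldr (\<lambda>z acc. free_red (y @ z @ acc)) zs' []"
      have "Lam (free_red (y @ z @ ?R)) = free_red (Lam y @ free_red (Lam z @ Lam ?R))"
        by (simp add: Lam_append)
      also have "\<dots> = free_red (free_red (g @ Lam z) @ Lam ?R)"
        using ly by (metis append_assoc free_red_append_left free_red_append_right)
      finally show ?case using Cons by simp
    qed
    have "zs \<noteq> []" using hs zs by auto
    then have G: "?G \<noteq> []" using free_factor_lemma[OF ry ny _ zs(2)] by blast
    have "reduced_word ?G" using \<open>zs \<noteq> []\<close> by (cases zs) auto
    then have "Lam ?G \<noteq> []" using G Lam_inj by fastforce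
    then show ?thesis using F eq[of zs] zs(1) by simp
  qed
qed

theorem mainTheorem19:
  fixes A B :: "(nat letter list) monoid" and a b c d :: "nat letter list"
  assumes "A = free_grp {0, 1}" and "a = gen_word 0" and "b = gen_word 1"
    and "B = free_grp {0, 1}" and "c = gen_word 0" and "d = gen_word 1"
  shows "rel_torsion_free A (generate A {a, conjg A a (b \<otimes>\<^bsub>A\<^esub> b) \<otimes>\<^bsub>A\<^esub> inv\<^bsub>A\<^esub> (conjg A a b) \<otimes>\<^bsub>A\<^esub> a})
       \<and> rel_torsion_free B (generate B {inv\<^bsub>B\<^esub> c, conjg B c (d \<otimes>\<^bsub>B\<^esub> d) \<otimes>\<^bsub>B\<^esub> inv\<^bsub>B\<^esub> (conjg B c d) \<otimes>\<^bsub>B\<^esub> c})"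
proof -
  have a: "a = [(0, False)]" "c = [(0, False)]" using assms by (simp_all add: gen_word_def)
  have b: "b = [(1, False)]" "d = [(1, False)]" using assms by (simp_all add: gen_word_def)
  show ?thesis unfolding assms(1,4) a b wA_eq inv_a gen1 gen2 using rtf_Cset by simp
qed


end
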